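(* Let $\Omega\subset\mathbb{Z}^2$ be finite, let $u:\Omega\to\{0,1\}$ be a binary image with foreground $\mathbb{X}=\{y\in\Omega:u(y)=1\}$ and background $\mathbb{X}^c=\Omega\setminus\mathbb{X}$, and let $x\in\Omega$ be a point all of whose eight neighbors lie in $\Omega$. Then $x$ is a simple point if and only if $\mathcal{C}(u_m)[x]=2$.
   Context: Neighborhoods: for $x=(x_1,x_2)$, $\mathbb{N}_4(x)=\{x'\in\Omega:|x_1-x_1'|+|x_2-x_2'|\le1\}$, $\mathbb{N}_8(x)=\{x'\in\Omega:\max(|x_1-x_1'|,|x_2-x_2'|)\le1\}$, $\mathring{\mathbb{N}}_n(x)=\mathbb{N}_n(x)\setminus\{x\}$. Foreground is 8-connected, background 4-connected. Geodesic neighborhoods w.r.t. $\mathbb{Y}\subset\Omega$: $\mathbb{N}^1_n(x,\mathbb{Y})=\mathring{\mathbb{N}}_n(x)\cap\mathbb{Y}$, $\mathbb{N}^k_n(x,\mathbb{Y})=\bigcup\{\mathbb{N}_n(y)\cap\mathring{\mathbb{N}}_8(x)\cap\mathbb{Y}:y\in\mathbb{N}^{k-1}_n(x,\mathbb{Y})\}$ for $k\ge2$. $T_4(x,\mathbb{Y})$ = number of 4-connected components of $\mathbb{N}^2_4(x,\mathbb{Y})$; $T_8(x,\mathbb{Y})$ = number of 8-connected components of $\mathbb{N}^1_8(x,\mathbb{Y})$. $x$ is a simple point iff $T_4(x,\mathbb{X}^c)=1$ and $T_8(x,\mathbb{X})=1$. Cyclic neighborhood: label the eight neighbors of $x$ as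 $x_1$ (top-left), $x_2$ (top), $x_3$ (top-right), $x_4$ (right), $x_5$ (bottom-right), $x_6$ (bottom), $x_7$ (bottom-left), $x_8$ (left), and set $x_9=x_1$. For a binary function $f$ on these neighbors, the crossing number is $\mathcal{C}(f)[x]=\sum_{i=1}^8\delta(|f(x_{i+1})-f(x_i)|)$ with $\delta(1)=1,\delta(0)=0$, i.e. the number of value changes $0\to1$ or $1\to0$ going once around the cycle. Define $m$ on $\mathring{\mathbb{N}}_8(x)$ by $m(y)=1$ if $y\in\mathbb{N}^2_4(x,\mathbb{X}^c)$ and $m(y)=0$ otherwise, and $u_m(y)=1-m(y)(1-u(y))$ (so $u_m(y)=0$ exactly when $y\in\mathbb{N}^2_4(x,\mathbb{X}^c)$). *)

theory Defs
  imports Main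
begin

type_synonym pt = "int \<times> int"

definition N4 :: "pt set \<Rightarrow> pt \<Rightarrow> pt set" where
  "N4 \<Omega> x = {x' \<in> \<Omega>. \<bar>fst x - fst x'\<bar> + \<bar>snd x - snd x'\<bar> \<le> 1}"

definition N8 :: "pt set \<Rightarrow> pt \<Rightarrow> pt set" where
  "N8 \<Omega> x = {x' \<in> \<Omega>. max \<bar>fst x - fst x'\<bar> \<bar>snd x - snd x'\<bar> \<le> 1}"

definition Nb :: "nat \<Rightarrow> pt set \<Rightarrow> pt \<Rightarrow> pt set" where
  "Nb n \<Omega> x = (if n = 4 then N4 \<Omega> x else N8 \<Omega> x)"

definition Nbo :: "nat \<Rightarrow> pt set \<Rightarrow> pt \<Rightarrow> pt set" where
  "Nbo n \<Omega> x = Nb n \<Omega> x - {x}"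

text \<open>Geodesic neighborhoods N^k_n(x,Y) (k \<ge> 1; k = 0 unused).\<close>
fun geoN :: "nat \<Rightarrow> nat \<Rightarrow> pt set \<Rightarrow> pt \<Rightarrow> pt set \<Rightarrow> pt set" where
  "geoN n 0 \<Omega> x Y = {}"
| "geoN n (Suc 0) \<Omega> x Y = Nbo n \<Omega> x \<inter> Y"
| "geoN n (Suc (Suc k)) \<Omega> x Y =
     (\<Union>y \<in> geoN n (Suc k) \<Omega> x Y. Nb n \<Omega> y \<inter> Nbo 8 \<Omega> x \<inter> Y)"

definition adj4 :: "(pt \<times> pt) set" where
  "adj4 = {(a, b). \<bar>fst a - fst b\<bar> + \<bar>snd a - snd b\<bar> = 1}"

definition adj8 :: "(pt \<times> pt) set" where
  "adj8 = {(a, b). max \<bar>fst a - fst b\<bar> \<bar>snd a - snd b\<bar> = 1}"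

definition conn :: "(pt \<times> pt) set \<Rightarrow> pt set \<Rightarrow> (pt \<times> pt) set" where
  "conn E S = (Restr E S)\<^sup>* \<inter> (S \<times> S)"

definition ncomp :: "(pt \<times> pt) set \<Rightarrow> pt set \<Rightarrow> nat" where
  "ncomp E S = card (S // conn E S)"

definition T4 :: "pt set \<Rightarrow> pt \<Rightarrow> pt set \<Rightarrow> nat" where
  "T4 \<Omega> x Y = ncomp adj4 (geoN 4 2 \<Omega> x Y)"

definition T8 :: "pt set \<Rightarrow> pt \<Rightarrow> pt set \<Rightarrow> nat" where
  "T8 \<Omega> x Y = ncomp adj8 (geoN 8 1 \<Omega> x Y)"

definition foreground :: "pt set \<Rightarrow> (pt \<Rightarrow> int) \<Rightarrow> pt set" where
  "foreground \<Omega> u = {y \<in> \<Omega>. u y = 1}"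

definition simple_point :: "pt set \<Rightarrow> (pt \<Rightarrow> int) \<Rightarrow> pt \<Rightarrow> bool" where
  "simple_point \<Omega> u x \<longleftrightarrow>
     T4 \<Omega> x (\<Omega> - foreground \<Omega> u) = 1 \<and> T8 \<Omega> x (foreground \<Omega> u) = 1"

text \<open>Cyclic neighborhood x_1..x_8 (x_9 = x_1); first coordinate = row (increasing downward),
  second coordinate = column (increasing to the right).\<close>
definition cnb :: "pt \<Rightarrow> nat \<Rightarrow> pt" where
  "cnb x i = (let (a, b) = x in
     (if i = 1 \<or> i = 9 then (a - 1, b - 1)
      else if i = 2 then (a - 1, b)
      else if i = 3 then (a - 1, b + 1)
      else if i = 4 then (a, b + 1)
      else if i = 5 then (a + 1, b + 1)
      else if i = 6 then (a + 1, b)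
      else if i = 7 then (a + 1, b - 1)
      else (a, b - 1)))"

definition delta :: "int \<Rightarrow> nat" where
  "delta t = (if t = 1 then 1 else 0)"

definition crossing :: "(pt \<Rightarrow> int) \<Rightarrow> pt \<Rightarrow> nat" where
  "crossing f x = (\<Sum>i = 1..8. delta \<bar>f (cnb x (i + 1)) - f (cnb x i)\<bar>)"

definition mfun :: "pt set \<Rightarrow> (pt \<Rightarrow> int) \<Rightarrow> pt \<Rightarrow> pt \<Rightarrow> int" where
  "mfun \<Omega> u x y = (if y \<in> geoN 4 2 \<Omega> x (\<Omega> - foreground \<Omega> u) then 1 else 0)"

definition um :: "pt set \<Rightarrow> (pt \<Rightarrow> int) \<Rightarrow> pt \<Rightarrow> pt \<Rightarrow> int" where
  "um \<Omega> u x y = 1 - mfun \<Omega> u x y * (1 - u y)"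

end

theory Submission
  imports Defs
begin

datatype v8 = V bool bool bool bool bool bool bool bool

fun at :: "v8 \<Rightarrow> nat \<Rightarrow> bool" where
  "at (V x1 x2 x3 x4 x5 x6 x7 x8) i =
    (if i = 1 then x1 else if i = 2 then x2 else if i = 3 then x3 else if i = 4 then x4
     else if i = 5 then x5 else if i = 6 then x6 else if i = 7 then x7 else x8)"

fun st4 :: "v8 \<Rightarrow> v8 \<Rightarrow> v8" where
  "st4 (V z1 z2 z3 z4 z5 z6 z7 z8) (V a1 a2 a3 a4 a5 a6 a7 a8) =
    V (a1 \<or> z1 \<and> (a8 \<or> a2)) (a2 \<or> z2 \<and> (a1 \<or> a3)) (a3 \<or> z3 \<and> (a2 \<or> a4))
      (a4 \<or> z4 \<and> (a3 \<or> a5)) (a5 \<or> z5 \<and> (a4 \<or> a6)) (a6 \<or> z6 \<and> (a5 \<or> a7))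
      (a7 \<or> z7 \<and> (a6 \<or> a8)) (a8 \<or> z8 \<and> (a7 \<or> a1))"

fun st8 :: "v8 \<Rightarrow> v8 \<Rightarrow> v8" where
  "st8 (V z1 z2 z3 z4 z5 z6 z7 z8) (V a1 a2 a3 a4 a5 a6 a7 a8) =
    V (a1 \<or> z1 \<and> (a8 \<or> a2)) (a2 \<or> z2 \<and> (a1 \<or> a3 \<or> a4 \<or> a8)) (a3 \<or> z3 \<and> (a2 \<or> a4))
      (a4 \<or> z4 \<and> (a3 \<or> a5 \<or> a2 \<or> a6)) (a5 \<or> z5 \<and> (a4 \<or> a6)) (a6 \<or> z6 \<and> (a5 \<or> a7 \<or> a4 \<or> a8))
      (a7 \<or> z7 \<and> (a6 \<or> a8)) (a8 \<or> z8 \<and> (a7 \<or> a1 \<or> a6 \<or> a2))"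

fun first8 :: "v8 \<Rightarrow> v8" where
  "first8 (V z1 z2 z3 z4 z5 z6 z7 z8) =
    V z1 (\<not>z1 \<and> z2) (\<not>z1 \<and> \<not>z2 \<and> z3) (\<not>z1 \<and> \<not>z2 \<and> \<not>z3 \<and> z4)
      (\<not>z1 \<and> \<not>z2 \<and> \<not>z3 \<and> \<not>z4 \<and> z5) (\<not>z1 \<and> \<not>z2 \<and> \<not>z3 \<and> \<not>z4 \<and> \<not>z5 \<and> z6)
      (\<not>z1 \<and> \<not>z2 \<and> \<not>z3 \<and> \<not>z4 \<and> \<not>z5 \<and> \<not>z6 \<and> z7)
      (\<not>z1 \<and> \<not>z2 \<and> \<not>z3 \<and> \<not>z4 \<and> \<not>z5 \<and> \<not>z6 \<and> \<not>z7 \<and> z8)"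

definition zero8 :: v8 where "zero8 = V False False False False False False False False"

definition it7 :: "(v8 \<Rightarrow> v8) \<Rightarrow> v8 \<Rightarrow> v8" where
  "it7 f a = f (f (f (f (f (f (f a))))))"

fun zt :: "v8 \<Rightarrow> v8" where
  "zt (V b1 b2 b3 b4 b5 b6 b7 b8) =
    V (\<not>b1 \<and> (\<not>b8 \<or> \<not>b2)) (\<not>b2) (\<not>b3 \<and> (\<not>b2 \<or> \<not>b4)) (\<not>b4)
      (\<not>b5 \<and> (\<not>b4 \<or> \<not>b6)) (\<not>b6) (\<not>b7 \<and> (\<not>b6 \<or> \<not>b8)) (\<not>b8)"

definition cb :: "bool \<Rightarrow> bool \<Rightarrow> nat" where "cb p q = (if p = q then 0 else 1)"

fun cross8 :: "v8 \<Rightarrow> nat" where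
  "cross8 (V z1 z2 z3 z4 z5 z6 z7 z8) =
     cb z1 z2 + cb z2 z3 + cb z3 z4 + cb z4 z5 + cb z5 z6 + cb z6 z7 + cb z7 z8 + cb z8 z1"

definition fixok :: "(v8 \<Rightarrow> v8 \<Rightarrow> v8) \<Rightarrow> v8 \<Rightarrow> bool" where
  "fixok st z = (z \<noteq> zero8 \<longrightarrow> st z (it7 (st z) (first8 z)) = it7 (st z) (first8 z))"

definition connok :: "(v8 \<Rightarrow> v8 \<Rightarrow> v8) \<Rightarrow> v8 \<Rightarrow> bool" where
  "connok st z = (z \<noteq> zero8 \<and> it7 (st z) (first8 z) = z)"


lemma comb:
  "fixok st4 (zt (V b1 b2 b3 b4 b5 b6 b7 b8)) \<and> fixok st8 (V b1 b2 b3 b4 b5 b6 b7 b8) \<and>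
   ((connok st4 (zt (V b1 b2 b3 b4 b5 b6 b7 b8)) \<and> connok st8 (V b1 b2 b3 b4 b5 b6 b7 b8))
     \<longleftrightarrow> cross8 (zt (V b1 b2 b3 b4 b5 b6 b7 b8)) = 2)"
  by (cases b1; cases b2; cases b3; cases b4; cases b5; cases b6; cases b7; cases b8;
      simp add: fixok_def connok_def it7_def zero8_def cb_def)

lemma set18: "{1..8::nat} = {1,2,3,4,5,6,7,8}" by auto

definition off :: "nat \<Rightarrow> pt" where "off i = cnb (0,0) i"

lemma off_simps: "off 1 = (-1,-1)" "off 2 = (-1,0)" "off 3 = (-1,1)" "off 4 = (0,1)"
  "off 5 = (1,1)" "off 6 = (1,0)" "off 7 = (1,-1)" "off 8 = (0,-1)" "off 9 = (-1,-1)" "off (Suc 0) = (-1,-1)"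
  by (simp_all add: off_def cnb_def)

lemma cnb_off: "cnb x i = (fst x + fst (off i), snd x + snd (off i))"
  by (cases x) (simp add: off_def cnb_def)

definition R4 :: "nat \<Rightarrow> nat \<Rightarrow> bool" where "R4 i j = ((off i, off j) \<in> adj4)"
definition R8 :: "nat \<Rightarrow> nat \<Rightarrow> bool" where "R8 i j = ((off i, off j) \<in> adj8)"


lemma at_st4: "j \<in> {1..8} \<Longrightarrow> at (st4 z a) j = (at a j \<or> at z j \<and> (\<exists>i\<in>{1..8}. at a i \<and> R4 i j))"
  apply (cases z; cases a)
  apply (simp only: set18 insert_iff empty_iff)
  apply (elim disjE)
  apply (simp_all add: R4_def adj4_def off_simps)
  apply blast+
  done


lemma at_st8: "j \<in> {1..8} \<Longrightarrow> at (st8 z a) j = (at a j \<or> at z j \<and> (\<exists>i\<in>{1..8}. at a i \<and> R8 i j))"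
  apply (cases z; cases a)
  apply (simp only: set18 insert_iff empty_iff)
  apply (elim disjE)
  apply (simp_all add: R8_def adj8_def off_simps)
  apply blast+
  done


lemma first8_ex: "z \<noteq> zero8 \<Longrightarrow> \<exists>a0\<in>{1..8}. at z a0 \<and> (\<forall>j\<in>{1..8}. at (first8 z) j = (j = a0))"
  apply (cases z)
  subgoal for z1 z2 z3 z4 z5 z6 z7 z8
    apply (simp only: set18)
    by (cases z1; cases z2; cases z3; cases z4; cases z5; cases z6; cases z7; cases z8;
      simp add: zero8_def)
  done

lemma v8_ext: "(\<forall>j\<in>{1..8}. at v j = at w j) \<Longrightarrow> v = w"
  apply (cases v; cases w)
  apply (simp only: set18 ball_simps)
  apply simp
  done


lemma G:
  fixes st :: "v8 \<Rightarrow> v8 \<Rightarrow> v8" and R :: "nat \<Rightarrow> nat \<Rightarrow> bool"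
  assumes H: "\<And>z a j. j \<in> {1..8} \<Longrightarrow> at (st z a) j = (at a j \<or> at z j \<and> (\<exists>i\<in>{1..8}. at a i \<and> R i j))"
    and symR: "\<And>i j. R i j = R j i"
    and fx: "fixok st z"
  shows "({j\<in>{1..8}. at z j} \<noteq> {} \<and> (\<forall>i\<in>{j\<in>{1..8}. at z j}. \<forall>j\<in>{j\<in>{1..8}. at z j}.
            (i, j) \<in> (Restr {(i, j). R i j} {j\<in>{1..8}. at z j})\<^sup>*)) \<longleftrightarrow> connok st z"
proof (cases "z = zero8")
  case True
  have "{j\<in>{1..8}. at z j} = {}" using True by (auto simp: zero8_def)
  then show ?thesis using True by (simp add: connok_def)
next
  case False
  define S where "S = {j\<in>{1..8::nat}. at z j}"
  define RS where "RS = Restr {(i, j). R i j} S"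
  obtain a0 where a0: "a0 \<in> {1..8}" "at z a0" "\<forall>j\<in>{1..8}. at (first8 z) j = (j = a0)"
    using first8_ex[OF False] by blast
  have a0S: "a0 \<in> S" using a0 by (simp add: S_def)
  define P where "P a = (\<forall>j\<in>{1..8}. at a j \<longrightarrow> j \<in> S \<and> (a0, j) \<in> RS\<^sup>*)" for a
  have Pstep: "P (st z a)" if "P a" for a
    unfolding P_def
  proof (intro ballI impI)
    fix j assume j: "j \<in> {1..8::nat}" and aj: "at (st z a) j"
    from H[OF j] aj have "at a j \<or> at z j \<and> (\<exists>i\<in>{1..8}. at a i \<and> R i j)" by simp
    then show "j \<in> S \<and> (a0, j) \<in> RS\<^sup>*"
    proof
      assume "at a j" then show ?thesis using that j by (simp add: P_def)
    next
      assume "at z j \<and> (\<exists>i\<in>{1..8}. at a i \<and> R i j)"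
      then obtain i where zj: "at z j" and i: "i \<in> {1..8}" "at a i" "R i j" by blast
      have iS: "i \<in> S" and ri: "(a0, i) \<in> RS\<^sup>*" using that i by (auto simp: P_def)
      have jS: "j \<in> S" using zj j by (simp add: S_def)
      have "(i, j) \<in> RS" using iS jS i by (simp add: RS_def)
      then show ?thesis using ri jS by (meson rtrancl.rtrancl_into_rtrancl)
    qed
  qed
  have P0: "P (first8 z)" using a0 a0S by (auto simp: P_def)
  define B where "B = it7 (st z) (first8 z)"
  have PB: "P B" unfolding B_def it7_def by (intro Pstep P0)
  have mono: "at (st z a) a0" if "at a a0" for a using H[OF a0(1)] that by simp
  have a0B: "at B a0" unfolding B_def it7_def
    by (intro mono) (use a0 in simp)
  have fixB: "st z B = B" using fx False by (simp add: fixok_def B_def)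
  have closed: "at B k" if "at B i" "(i, k) \<in> RS" for i k
  proof -
    have k: "k \<in> {1..8}" "at z k" and i: "i \<in> {1..8}" "R i k"
      using that(2) by (auto simp: RS_def S_def)
    have "at (st z B) k" using H[OF k(1)] k i that(1) by blast
    then show ?thesis using fixB by simp
  qed
  have reach: "at B j" if "(a0, j) \<in> RS\<^sup>*" for j
    using that
  proof (induction rule: rtrancl_induct)
    case base then show ?case using a0B .
  next
    case (step y k) then show ?case using closed by blast
  qed
  have symRS: "sym RS" using symR by (auto simp: RS_def sym_def)
  have conv: "(j, a0) \<in> RS\<^sup>*" if "(a0, j) \<in> RS\<^sup>*" for j
    using that symRS by (meson sym_rtrancl symD)
  show ?thesis
    unfolding S_def[symmetric] RS_def[symmetric]
  proof
    assume A: "S \<noteq> {} \<and> (\<forall>i\<in>S. \<forall>j\<in>S. (i, j) \<in> RS\<^sup>*)"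
    have "B = z"
    proof (rule v8_ext, intro ballI)
      fix j assume j: "j \<in> {1..8::nat}"
      show "at B j = at z j"
      proof
        assume "at B j" then show "at z j" using PB j by (simp add: P_def S_def)
      next
        assume "at z j" then have "j \<in> S" using j by (simp add: S_def)
        then show "at B j" using A a0S reach by blast
      qed
    qed
    then show "connok st z" using False by (simp add: connok_def B_def)
  next
    assume "connok st z"
    then have Bz: "B = z" by (simp add: connok_def B_def)
    have "(i, j) \<in> RS\<^sup>*" if "i \<in> S" "j \<in> S" for i j
    proof -
      have "at B i" "at B j" using that Bz by (auto simp: S_def)
      then have "(a0, i) \<in> RS\<^sup>*" "(a0, j) \<in> RS\<^sup>*" using PB that by (auto simp: P_def S_def)
      then show ?thesis using conv by (meson rtrancl_trans)
    qed
    then show "S \<noteq> {} \<and> (\<forall>i\<in>S. \<forall>j\<in>S. (i, j) \<in> RS\<^sup>*)" using a0S by blast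
  qed
qed

lemma ncomp_one:
  assumes "sym E"
  shows "ncomp E S = 1 \<longleftrightarrow> S \<noteq> {} \<and> (\<forall>a\<in>S. \<forall>b\<in>S. (a, b) \<in> (Restr E S)\<^sup>*)"
proof -
  let ?r = "conn E S"
  have symR: "sym (Restr E S)" using assms by (auto simp: sym_def)
  have eq: "equiv S ?r"
    unfolding equiv_def refl_on_def sym_def trans_def conn_def
    using symR by (auto intro: rtrancl_trans dest: symD[OF sym_rtrancl[OF symR]])
  show ?thesis
  proof
    assume c: "ncomp E S = 1"
    then obtain C where C: "S // ?r = {C}" unfolding ncomp_def by (meson card_1_singletonE)
    have "S \<noteq> {}" using C by auto
    moreover have "(a, b) \<in> (Restr E S)\<^sup>*" if "a \<in> S" "b \<in> S" for a b
    proof -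
      have "?r `` {a} = C" "?r `` {b} = C" using C that by (auto intro: quotientI)
      moreover have "b \<in> ?r `` {b}" using eq that by (meson equiv_class_self)
      ultimately have "(a, b) \<in> ?r" by auto
      then show ?thesis by (simp add: conn_def)
    qed
    ultimately show "S \<noteq> {} \<and> (\<forall>a\<in>S. \<forall>b\<in>S. (a, b) \<in> (Restr E S)\<^sup>*)" by blast
  next
    assume A: "S \<noteq> {} \<and> (\<forall>a\<in>S. \<forall>b\<in>S. (a, b) \<in> (Restr E S)\<^sup>*)"
    have "S // ?r = {S}"
    proof -
      have "?r `` {a} = S" if "a \<in> S" for a using A that by (auto simp: conn_def)
      then show ?thesis using A unfolding quotient_def by auto
    qed
    then show "ncomp E S = 1" by (simp add: ncomp_def)
  qed
qed

lemma rt_inj: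
  assumes inj: "inj_on p A" and i: "i \<in> A" and j: "j \<in> A"
  shows "(p i, p j) \<in> (Restr E (p ` A))\<^sup>* \<longleftrightarrow> (i, j) \<in> (Restr {(i, j). (p i, p j) \<in> E} A)\<^sup>*"
proof
  assume "(i, j) \<in> (Restr {(i, j). (p i, p j) \<in> E} A)\<^sup>*"
  then show "(p i, p j) \<in> (Restr E (p ` A))\<^sup>*"
  proof (induction rule: rtrancl_induct)
    case base then show ?case by simp
  next
    case (step y z)
    then have "(p y, p z) \<in> Restr E (p ` A)" by auto
    then show ?case using step.IH by (meson rtrancl.rtrancl_into_rtrancl)
  qed
next
  assume "(p i, p j) \<in> (Restr E (p ` A))\<^sup>*"
  then have "\<forall>k\<in>A. p j = p k \<longrightarrow> (i, k) \<in> (Restr {(i, j). (p i, p j) \<in> E} A)\<^sup>*"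
  proof (induction rule: rtrancl_induct)
    case base then show ?case using inj i by (auto dest: inj_onD)
  next
    case (step y z)
    from step.hyps(2) obtain y' z' where y': "y' \<in> A" "y = p y'" and z': "z' \<in> A" "z = p z'"
      and e: "(y, z) \<in> E" by auto
    have iy: "(i, y') \<in> (Restr {(i, j). (p i, p j) \<in> E} A)\<^sup>*" using step.IH y' by blast
    show ?case
    proof (intro ballI impI)
      fix k assume k: "k \<in> A" "z = p k"
      have "(y', k) \<in> Restr {(i, j). (p i, p j) \<in> E} A" using y' k e by auto
      then show "(i, k) \<in> (Restr {(i, j). (p i, p j) \<in> E} A)\<^sup>*" using iy
        by (meson rtrancl.rtrancl_into_rtrancl)
    qed
  qed
  then show "(i, j) \<in> (Restr {(i, j). (p i, p j) \<in> E} A)\<^sup>*" using j by blast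
qed

lemma ncomp_img:
  assumes "sym E" "inj_on p A"
  shows "ncomp E (p ` A) = 1 \<longleftrightarrow> A \<noteq> {} \<and> (\<forall>i\<in>A. \<forall>j\<in>A. (i, j) \<in> (Restr {(i, j). (p i, p j) \<in> E} A)\<^sup>*)"
  unfolding ncomp_one[OF assms(1)] using rt_inj[OF assms(2)] by auto


lemma sym_adj4: "sym adj4" by (auto simp: sym_def adj4_def abs_minus_commute)
lemma sym_adj8: "sym adj8" by (auto simp: sym_def adj8_def abs_minus_commute)
lemma symR4: "R4 i j = R4 j i" by (auto simp: R4_def adj4_def abs_minus_commute)
lemma symR8: "R8 i j = R8 j i" by (auto simp: R8_def adj8_def abs_minus_commute)

lemma R4_cnb: "{(i, j). (cnb x i, cnb x j) \<in> adj4} = {(i, j). R4 i j}"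
  by (auto simp: cnb_off R4_def adj4_def)
lemma R8_cnb: "{(i, j). (cnb x i, cnb x j) \<in> adj8} = {(i, j). R8 i j}"
  by (auto simp: cnb_off R8_def adj8_def)

lemma inj_cnb: "inj_on (cnb x) {1..8}"
proof -
  have "off i = off j \<Longrightarrow> i \<in> {1..8} \<Longrightarrow> j \<in> {1..8} \<Longrightarrow> i = j" for i j
    apply (simp only: set18 insert_iff empty_iff)
    apply (elim disjE)
    apply (simp_all add: off_simps)
    done
  then show ?thesis unfolding inj_on_def
  proof (intro ballI impI)
    fix i j assume *: "\<And>i j. off i = off j \<Longrightarrow> i \<in> {1..8} \<Longrightarrow> j \<in> {1..8} \<Longrightarrow> i = j"
      and ij: "i \<in> {1..8::nat}" "j \<in> {1..8::nat}" "cnb x i = cnb x j"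
    have "off i = off j" using ij(3) by (simp add: cnb_off prod_eq_iff)
    then show "i = j" using * ij by blast
  qed
qed

lemma nbo8:
  assumes "\<forall>i\<in>{1..8}. cnb x i \<in> \<Omega>"
  shows "Nbo 8 \<Omega> x = cnb x ` {1..8}"
proof
  show "cnb x ` {1..8} \<subseteq> Nbo 8 \<Omega> x"
  proof
    fix y assume "y \<in> cnb x ` {1..8}"
    then obtain i where i: "i \<in> {1..8}" "y = cnb x i" by blast
    have "max \<bar>fst (off i)\<bar> \<bar>snd (off i)\<bar> = 1"
      using i(1) apply (simp only: set18 insert_iff empty_iff)
      by (elim disjE) (simp_all add: off_simps)
    moreover have "y \<in> \<Omega>" using i assms by blast
    moreover have "max \<bar>fst x - fst y\<bar> \<bar>snd x - snd y\<bar> \<le> 1" using i(2) \<open>max _ _ = 1\<close> by (simp add: cnb_off)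
    moreover have "y \<noteq> x" using i(2) \<open>max _ _ = 1\<close> by (auto simp: cnb_off prod_eq_iff)
    ultimately show "y \<in> Nbo 8 \<Omega> x" by (simp add: Nbo_def Nb_def N8_def)
  qed
next
  show "Nbo 8 \<Omega> x \<subseteq> cnb x ` {1..8}"
  proof
    fix y assume y: "y \<in> Nbo 8 \<Omega> x"
    define d1 where "d1 = fst y - fst x"
    define d2 where "d2 = snd y - snd x"
    have yd: "y = (fst x + d1, snd x + d2)" by (simp add: d1_def d2_def)
    have b: "\<bar>d1\<bar> \<le> 1" "\<bar>d2\<bar> \<le> 1" "\<not> (d1 = 0 \<and> d2 = 0)"
      using y by (auto simp: Nbo_def Nb_def N8_def d1_def d2_def prod_eq_iff)
    have "d1 = -1 \<or> d1 = 0 \<or> d1 = 1" "d2 = -1 \<or> d2 = 0 \<or> d2 = 1" using b by arith+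
    then show "y \<in> cnb x ` {1..8}"
      unfolding yd set18 using b
      apply (elim disjE)
      apply (simp_all add: cnb_off off_simps image_iff)
      done
  qed
qed

lemma nbo4:
  shows "Nbo 4 \<Omega> x \<subseteq> cnb x ` {2,4,6,8}"
proof
  fix y assume y: "y \<in> Nbo 4 \<Omega> x"
  define d1 where "d1 = fst y - fst x"
  define d2 where "d2 = snd y - snd x"
  have yd: "y = (fst x + d1, snd x + d2)" by (simp add: d1_def d2_def)
  have b: "\<bar>d1\<bar> + \<bar>d2\<bar> \<le> 1" "\<not> (d1 = 0 \<and> d2 = 0)"
    using y by (auto simp: Nbo_def Nb_def N4_def d1_def d2_def prod_eq_iff)
  have "d1 = -1 \<and> d2 = 0 \<or> d1 = 1 \<and> d2 = 0 \<or> d1 = 0 \<and> d2 = 1 \<or> d1 = 0 \<and> d2 = -1" using b by arith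
  then show "y \<in> cnb x ` {2,4,6,8}"
    unfolding yd
    apply (elim disjE)
    apply (simp_all add: cnb_off off_simps image_iff)
    done
qed

lemma nbo4': "cnb x j \<in> \<Omega> \<Longrightarrow> j \<in> {2,4,6,8} \<Longrightarrow> cnb x j \<in> Nbo 4 \<Omega> x"
  apply (simp add: Nbo_def Nb_def N4_def cnb_off prod_eq_iff)
  apply (elim disjE)
  apply (simp_all add: off_simps)
  done

lemma at_zt: "i \<in> {1..8} \<Longrightarrow> at (zt b) i = (\<not> at b i \<and> (\<exists>j\<in>{2,4,6,8}. \<not> at b j \<and>
   \<bar>fst (off j) - fst (off i)\<bar> + \<bar>snd (off j) - snd (off i)\<bar> \<le> 1))"
  apply (cases b)
  apply (simp only: set18 insert_iff empty_iff)
  apply (elim disjE)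
  apply (simp_all add: off_simps)
  apply blast+
  done

lemma sum18: "(\<Sum>i=1..8. (f :: nat \<Rightarrow> nat) i) = f 1 + f 2 + f 3 + f 4 + f 5 + f 6 + f 7 + (f 8 :: nat)"
  by (simp only: set18) simp

lemma delta_cb: "delta \<bar>(if a then 0 else 1) - (if b then (0::int) else 1)\<bar> = cb b a"
  by (simp add: delta_def cb_def)

lemma cross8_alt: "cross8 z = cb (at z 1) (at z 2) + cb (at z 2) (at z 3) + cb (at z 3) (at z 4)
  + cb (at z 4) (at z 5) + cb (at z 5) (at z 6) + cb (at z 6) (at z 7) + cb (at z 7) (at z 8) + cb (at z 8) (at z 1)"
  by (cases z) simp

lemma crossing8: "crossing f x = delta \<bar>f (cnb x 2) - f (cnb x 1)\<bar> + delta \<bar>f (cnb x 3) - f (cnb x 2)\<bar>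
  + delta \<bar>f (cnb x 4) - f (cnb x 3)\<bar> + delta \<bar>f (cnb x 5) - f (cnb x 4)\<bar> + delta \<bar>f (cnb x 6) - f (cnb x 5)\<bar>
  + delta \<bar>f (cnb x 7) - f (cnb x 6)\<bar> + delta \<bar>f (cnb x 8) - f (cnb x 7)\<bar> + delta \<bar>f (cnb x 1) - f (cnb x 8)\<bar>"
  unfolding crossing_def sum18 by (simp add: cnb_def)

theorem theorem2:
  fixes \<Omega> :: "(int \<times> int) set" and u :: "int \<times> int \<Rightarrow> int" and x :: "int \<times> int"
  assumes "finite \<Omega>"
    and "\<forall>y \<in> \<Omega>. u y \<in> {0, 1}"
    and "x \<in> \<Omega>"
    and "\<forall>i \<in> {1..8}. cnb x i \<in> \<Omega>"
  shows "simple_point \<Omega> u x \<longleftrightarrow> crossing (um \<Omega> u x) x = 2"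
proof -
  note inO = assms(4)
  define X where "X = foreground \<Omega> u"
  define bt where "bt = V (u (cnb x 1) = 1) (u (cnb x 2) = 1) (u (cnb x 3) = 1) (u (cnb x 4) = 1)
     (u (cnb x 5) = 1) (u (cnb x 6) = 1) (u (cnb x 7) = 1) (u (cnb x 8) = 1)"
  define z where "z = zt bt"
  have atbt: "at bt i = (u (cnb x i) = 1)" if "i \<in> {1..8}" for i
    using that unfolding bt_def
    apply (simp only: set18 insert_iff empty_iff)
    apply (elim disjE)
    apply simp_all
    done
  have Fset: "geoN 8 1 \<Omega> x X = cnb x ` {i\<in>{1..8}. at bt i}"
    using inO by (auto simp: nbo8[OF inO] X_def foreground_def atbt)
  have N2mem: "y \<in> geoN 4 2 \<Omega> x (\<Omega> - X) \<longleftrightarrow> y \<in> cnb x ` {i\<in>{1..8}. at z i}" for y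
  proof
    assume "y \<in> geoN 4 2 \<Omega> x (\<Omega> - X)"
    then obtain y' where y': "y' \<in> Nbo 4 \<Omega> x" "y' \<in> \<Omega>" "u y' \<noteq> 1" and
      y: "y \<in> N4 \<Omega> y'" "y \<in> Nbo 8 \<Omega> x" "u y \<noteq> 1"
      by (auto simp: numeral_2_eq_2 Nb_def X_def foreground_def)
    obtain j where j: "j \<in> {2,4,6,8}" "y' = cnb x j" using nbo4 y'(1) by blast
    obtain i where i: "i \<in> {1..8}" "y = cnb x i" using y(2) nbo8[OF inO] by blast
    have "at z i"
      unfolding z_def using i y y' j
      by (subst at_zt) (auto simp: atbt N4_def cnb_off intro!: bexI[of _ j])
    then show "y \<in> cnb x ` {i\<in>{1..8}. at z i}" using i by blast
  next
    assume "y \<in> cnb x ` {i\<in>{1..8}. at z i}"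
    then obtain i where i: "i \<in> {1..8}" "at z i" "y = cnb x i" by blast
    from i(2) obtain j where j: "j \<in> {2,4,6,8}" "\<not> at bt j" "\<not> at bt i"
      "\<bar>fst (off j) - fst (off i)\<bar> + \<bar>snd (off j) - snd (off i)\<bar> \<le> 1"
      unfolding z_def using at_zt[OF i(1)] by blast
    have j8: "j \<in> {1..8}" using j(1) by auto
    have yj: "cnb x j \<in> Nbo 4 \<Omega> x" using nbo4' inO j8 j(1) by blast
    have "y \<in> N4 \<Omega> (cnb x j)" using i inO j(4) by (auto simp: N4_def cnb_off)
    moreover have "y \<in> Nbo 8 \<Omega> x" using i nbo8[OF inO] by blast
    moreover have "y \<in> \<Omega> - X" using i inO atbt j(3) by (auto simp: X_def foreground_def)
    moreover have "cnb x j \<in> \<Omega> - X" using j8 inO atbt j(2) by (auto simp: X_def foreground_def)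
    ultimately show "y \<in> geoN 4 2 \<Omega> x (\<Omega> - X)" using yj
      by (auto simp: numeral_2_eq_2 Nb_def)
  qed
  have N2set: "geoN 4 2 \<Omega> x (\<Omega> - X) = cnb x ` {i\<in>{1..8}. at z i}" using N2mem by blast
  have injS: "inj_on (cnb x) {i\<in>{1..8}. at w i}" for w by (rule inj_on_subset[OF inj_cnb]) auto
  have c: "fixok st4 z \<and> fixok st8 bt \<and> ((connok st4 z \<and> connok st8 bt) \<longleftrightarrow> cross8 z = 2)"
    unfolding z_def bt_def by (rule comb)
  have T4eq: "T4 \<Omega> x (\<Omega> - X) = 1 \<longleftrightarrow> connok st4 z"
    unfolding T4_def N2set ncomp_img[OF sym_adj4 injS] R4_cnb
    using G[OF at_st4 symR4] c by blast
  have T8eq: "T8 \<Omega> x X = 1 \<longleftrightarrow> connok st8 bt"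
    unfolding T8_def Fset ncomp_img[OF sym_adj8 injS] R8_cnb
    using G[OF at_st8 symR8] c by blast
  have umv: "um \<Omega> u x (cnb x i) = (if at z i then 0 else 1)" if i: "i \<in> {1..8}" for i
  proof -
    have "cnb x i \<in> geoN 4 2 \<Omega> x (\<Omega> - X) \<longleftrightarrow> at z i"
      unfolding N2set using i inj_onD[OF inj_cnb[of x]] by auto
    moreover have "at z i \<Longrightarrow> u (cnb x i) = 0"
      using at_zt[OF i, of bt] atbt[OF i] assms(2) inO i unfolding z_def by auto
    ultimately show ?thesis by (auto simp: um_def mfun_def X_def)
  qed
  have c9: "cnb x 9 = cnb x 1" by (simp add: cnb_def)
  have cr: "crossing (um \<Omega> u x) x = cross8 z"
    unfolding crossing8 cross8_alt
    by (simp add: umv delta_cb)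
  show ?thesis
    unfolding simple_point_def X_def[symmetric] T4eq T8eq cr using c by blast
qed

end
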